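(* Let $r\ge1$ be an integer and let $G$ be an $(r+1)$-path degenerate graph. If $G$ is a forest, then $\mathrm{arb}_r(G)=1$; otherwise $\mathrm{arb}_r(G)=r+1$.
   Context: Graphs are finite and simple. For an integer $r\ge1$, the generalized $r$-arboricity $\mathrm{arb}_r(G)$ is the minimum number of colors in a (not necessarily proper) coloring of the edges of $G$ such that every cycle $C$ of $G$ receives at least $\min\{|C|,r+1\}$ distinct colors ($|C|$ being the length of $C$). A strict ear of a graph $G$ is a path of $G$ whose internal vertices all have degree $2$ in $G$ and whose two endpoints are distinct. For an integer $p\ge1$, a $p$-reduction of $G$ is the deletion of either an isolated vertex, or a vertex of degree $1$, or the internal vertices of a strict ear of $G$ of length at least $p$. A graph is $p$-path degenerate if it can be reduced to the empty graph by a sequence of $p$-reductions. *)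

theory Defs
  imports Main
begin

definition simple_graph :: "'a set \<Rightarrow> 'a set set \<Rightarrow> bool" where
  "simple_graph V E \<longleftrightarrow> finite V \<and>
     (\<forall>e\<in>E. \<exists>u v. u \<noteq> v \<and> u \<in> V \<and> v \<in> V \<and> e = {u, v})"

definition degree :: "'a set set \<Rightarrow> 'a \<Rightarrow> nat" where
  "degree E v = card {e \<in> E. v \<in> e}"

definition is_cycle :: "'a set \<Rightarrow> 'a set set \<Rightarrow> 'a list \<Rightarrow> bool" where
  "is_cycle V E vs \<longleftrightarrow> length vs \<ge> 3 \<and> distinct vs \<and> set vs \<subseteq> V \<and>
     (\<forall>i < length vs. {vs ! i, vs ! ((i + 1) mod length vs)} \<in> E)"

definition cycle_edges :: "'a list \<Rightarrow> 'a set set" where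
  "cycle_edges vs = {{vs ! i, vs ! ((i + 1) mod length vs)} | i. i < length vs}"

definition forest :: "'a set \<Rightarrow> 'a set set \<Rightarrow> bool" where
  "forest V E \<longleftrightarrow> \<not> (\<exists>vs. is_cycle V E vs)"

definition good_coloring :: "nat \<Rightarrow> 'a set \<Rightarrow> 'a set set \<Rightarrow> nat \<Rightarrow> ('a set \<Rightarrow> nat) \<Rightarrow> bool" where
  "good_coloring r V E k c \<longleftrightarrow> (\<forall>e\<in>E. c e < k) \<and>
     (\<forall>vs. is_cycle V E vs \<longrightarrow> card (c ` cycle_edges vs) \<ge> min (length vs) (r + 1))"

text \<open>Generalized r-arboricity: minimum number of colours (at least one colour is used,
  so that an edgeless graph has value 1, as in the paper's forest case).\<close>
definition arb :: "nat \<Rightarrow> 'a set \<Rightarrow> 'a set set \<Rightarrow> nat" where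
  "arb r V E = (LEAST k. k \<ge> 1 \<and> (\<exists>c. good_coloring r V E k c))"

definition strict_ear :: "'a set \<Rightarrow> 'a set set \<Rightarrow> 'a list \<Rightarrow> bool" where
  "strict_ear V E xs \<longleftrightarrow> length xs \<ge> 2 \<and> distinct xs \<and> set xs \<subseteq> V \<and>
     (\<forall>i. i + 1 < length xs \<longrightarrow> {xs ! i, xs ! (i + 1)} \<in> E) \<and>
     (\<forall>i. 0 < i \<and> i + 1 < length xs \<longrightarrow> degree E (xs ! i) = 2)"

definition delete_vertices :: "'a set \<Rightarrow> 'a set \<Rightarrow> 'a set set \<Rightarrow> 'a set \<times> 'a set set" where
  "delete_vertices S V E = (V - S, {e \<in> E. e \<inter> S = {}})"

definition p_reduction :: "nat \<Rightarrow> 'a set \<Rightarrow> 'a set set \<Rightarrow> 'a set \<Rightarrow> 'a set set \<Rightarrow> bool" where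
  "p_reduction p V E V' E' \<longleftrightarrow>
     (\<exists>v\<in>V. (degree E v = 0 \<or> degree E v = 1) \<and> (V', E') = delete_vertices {v} V E) \<or>
     (\<exists>xs. strict_ear V E xs \<and> length xs - 1 \<ge> p \<and>
        (V', E') = delete_vertices (set (butlast (tl xs))) V E)"

inductive path_degenerate :: "nat \<Rightarrow> 'a set \<Rightarrow> 'a set set \<Rightarrow> bool" for p where
  empty: "path_degenerate p {} {}"
| step: "p_reduction p V E V' E' \<Longrightarrow> path_degenerate p V' E' \<Longrightarrow> path_degenerate p V E"

end

theory Submission
  imports Defs
begin

lemma cycle_edges_sub: "is_cycle V E vs \<Longrightarrow> cycle_edges vs \<subseteq> E"
  unfolding is_cycle_def cycle_edges_def by auto

lemma cycle_edges_img: "cycle_edges vs = (\<lambda>i. {vs ! i, vs ! ((i + 1) mod length vs)}) ` {..<length vs}"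
  unfolding cycle_edges_def by auto

lemma finite_cycle_edges: "finite (cycle_edges vs)"
  unfolding cycle_edges_img by simp

lemma card_cycle_edges: "card (cycle_edges vs) \<le> length vs"
  unfolding cycle_edges_img by (metis card_image_le card_lessThan finite_lessThan)

lemma mod_mem: assumes "i < length vs" shows "vs ! (k mod length vs) \<in> set vs"
proof -
  from assms have "0 < length vs" by (rule le_less_trans[OF le0])
  thus ?thesis by (intro nth_mem) simp
qed

lemma cycle_edges_vs: "e \<in> cycle_edges vs \<Longrightarrow> e \<subseteq> set vs"
  unfolding cycle_edges_def using mod_mem by fastforce

lemma cycle_two:
  assumes "is_cycle V E vs" "v \<in> set vs"
  shows "\<exists>e1 e2. e1 \<in> cycle_edges vs \<and> e2 \<in> cycle_edges vs \<and> e1 \<noteq> e2 \<and> v \<in> e1 \<and> v \<in> e2"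
proof -
  let ?n = "length vs"
  have n3: "?n \<ge> 3" and dist: "distinct vs" using assms(1) unfolding is_cycle_def by auto
  obtain i where i: "i < ?n" "vs ! i = v" using assms(2) by (metis in_set_conv_nth)
  define j1 where "j1 = (if i + 1 = ?n then 0 else i + 1)"
  define j0 where "j0 = (if i = 0 then ?n - 1 else i - 1)"
  have j1: "(i + 1) mod ?n = j1" "j1 < ?n" using i n3 unfolding j1_def by auto
  have j0: "(j0 + 1) mod ?n = i" "j0 < ?n" using i n3 unfolding j0_def by auto
  have ne: "j1 \<noteq> j0" using i n3 unfolding j1_def j0_def by auto
  have ni1: "j1 \<noteq> i" using i n3 unfolding j1_def by auto
  have ni0: "j0 \<noteq> i" using i n3 unfolding j0_def by auto
  define e1 where "e1 = {vs ! i, vs ! ((i + 1) mod ?n)}"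
  define e2 where "e2 = {vs ! j0, vs ! ((j0 + 1) mod ?n)}"
  have "e1 \<in> cycle_edges vs" unfolding e1_def cycle_edges_def using i by auto
  moreover have "e2 \<in> cycle_edges vs" unfolding e2_def cycle_edges_def using j0 by auto
  moreover have "e1 \<noteq> e2"
  proof
    assume "e1 = e2"
    hence "vs ! j1 \<in> {vs ! j0, vs ! i}" unfolding e1_def e2_def j1 j0 by auto
    thus False using dist ne ni1 j1 j0 i by (auto simp: nth_eq_iff_index_eq)
  qed
  moreover have "v \<in> e1" "v \<in> e2" unfolding e1_def e2_def using i j0 by auto
  ultimately show ?thesis by blast
qed

lemma deg2:
  assumes "finite E" "degree E v = 2" "e1 \<in> E" "e2 \<in> E" "e1 \<noteq> e2" "v \<in> e1" "v \<in> e2"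
    "f \<in> E" "v \<in> f"
  shows "f = e1 \<or> f = e2"
proof -
  have sub: "{e1, e2} \<subseteq> {e \<in> E. v \<in> e}" using assms by auto
  have "card {e1, e2} = card {e \<in> E. v \<in> e}" using assms(2,5) unfolding degree_def by simp
  hence "{e1, e2} = {e \<in> E. v \<in> e}" using sub assms(1) by (intro card_subset_eq) auto
  thus ?thesis using assms by auto
qed

lemma deg_ge2:
  assumes "finite E" "e1 \<in> E" "e2 \<in> E" "e1 \<noteq> e2" "v \<in> e1" "v \<in> e2"
  shows "degree E v \<ge> 2"
proof -
  have "{e1, e2} \<subseteq> {e \<in> E. v \<in> e}" using assms by auto
  hence "card {e1, e2} \<le> card {e \<in> E. v \<in> e}" using assms(1) by (intro card_mono) auto
  thus ?thesis using assms(4) unfolding degree_def by simp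
qed

lemma cycle_vertex_deg:
  assumes "finite E" "is_cycle V E vs" "v \<in> set vs"
  shows "degree E v \<ge> 2"
  using cycle_two[OF assms(2,3)] cycle_edges_sub[OF assms(2)] deg_ge2[OF assms(1)] by blast

lemma inner_set: "set (butlast (tl xs)) = {xs ! j | j. 0 < j \<and> j + 1 < length xs}"
proof -
  have "set (butlast (tl xs)) = {butlast (tl xs) ! k | k. k < length xs - 2}"
    by (auto simp: set_conv_nth)
  also have "\<dots> = {xs ! j | j. 0 < j \<and> j + 1 < length xs}"
  proof (safe)
    fix k assume "k < length xs - 2"
    thus "\<exists>j. butlast (tl xs) ! k = xs ! j \<and> 0 < j \<and> j + 1 < length xs"
      by (intro exI[of _ "k+1"]) (auto simp: nth_butlast nth_tl)
  next
    fix j assume "0 < j" "j + 1 < length xs"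
    thus "\<exists>k. xs ! j = butlast (tl xs) ! k \<and> k < length xs - 2"
      by (intro exI[of _ "j-1"]) (auto simp: nth_butlast nth_tl)
  qed
  finally show ?thesis .
qed

definition ear_edges :: "'a list \<Rightarrow> 'a set set" where
  "ear_edges xs = {{xs ! i, xs ! (i + 1)} | i. i + 1 < length xs}"

lemma ear_inj:
  assumes "distinct xs" "i + 1 < length xs" "k + 1 < length xs"
    "{xs ! i, xs ! (i + 1)} = {xs ! k, xs ! (k + 1)}"
  shows "i = k"
proof -
  have "xs ! i = xs ! k \<or> (xs ! i = xs ! (k + 1) \<and> xs ! (i + 1) = xs ! k)"
    using assms(4) by (auto simp: doubleton_eq_iff)
  thus ?thesis using assms(1-3) by (auto simp: nth_eq_iff_index_eq)
qed

lemma ear_card: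
  assumes "distinct xs"
  shows "card (ear_edges xs) = length xs - 1"
proof -
  have "ear_edges xs = (\<lambda>i. {xs ! i, xs ! (i + 1)}) ` {..<length xs - 1}"
    unfolding ear_edges_def by auto
  moreover have "inj_on (\<lambda>i. {xs ! i, xs ! (i + 1)}) {..<length xs - 1}"
    using ear_inj[OF assms] by (auto simp: inj_on_def)
  ultimately show ?thesis by (simp add: card_image)
qed

lemma ear_step:
  assumes "finite E" "strict_ear V E xs" "is_cycle V E vs" "0 < j" "j + 1 < length xs"
    "xs ! j \<in> set vs"
  shows "{xs ! (j - 1), xs ! j} \<in> cycle_edges vs \<and> {xs ! j, xs ! (j + 1)} \<in> cycle_edges vs"
proof -
  have se: "distinct xs" "\<forall>i. i + 1 < length xs \<longrightarrow> {xs ! i, xs ! (i + 1)} \<in> E"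
    "degree E (xs ! j) = 2"
    using assms(2,4,5) unfolding strict_ear_def by auto
  have eL: "{xs ! (j - 1), xs ! j} \<in> E" using se(2)[rule_format, of "j-1"] assms(4,5) by auto
  have eR: "{xs ! j, xs ! (j + 1)} \<in> E" using se(2) assms(5) by auto
  obtain e1 e2 where e: "e1 \<in> cycle_edges vs" "e2 \<in> cycle_edges vs" "e1 \<noteq> e2"
    "xs ! j \<in> e1" "xs ! j \<in> e2" using cycle_two[OF assms(3,6)] by blast
  have eE: "e1 \<in> E" "e2 \<in> E" using e cycle_edges_sub[OF assms(3)] by auto
  have "{xs ! (j - 1), xs ! j} = e1 \<or> {xs ! (j - 1), xs ! j} = e2"
    by (rule deg2[OF assms(1) se(3) eE e(3-5) eL]) simp
  moreover have "{xs ! j, xs ! (j + 1)} = e1 \<or> {xs ! j, xs ! (j + 1)} = e2"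
    by (rule deg2[OF assms(1) se(3) eE e(3-5) eR]) simp
  ultimately show ?thesis using e(1,2) by metis
qed

lemma ear_all:
  assumes "finite E" "strict_ear V E xs" "is_cycle V E vs" "x \<in> set vs"
    "x \<in> set (butlast (tl xs))"
  shows "ear_edges xs \<subseteq> cycle_edges vs"
proof -
  let ?n = "length xs"
  obtain j0 where j0: "0 < j0" "j0 + 1 < ?n" "x = xs ! j0" using assms(5) unfolding inner_set by auto
  let ?P = "\<lambda>j. xs ! j \<in> set vs"
  have step: "?P (j - 1) \<and> ?P (j + 1)" if "0 < j" "j + 1 < ?n" "?P j" for j
  proof -
    have es: "{xs ! (j - 1), xs ! j} \<in> cycle_edges vs" "{xs ! j, xs ! (j + 1)} \<in> cycle_edges vs"
      using ear_step[OF assms(1-3) that] by auto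
    show ?thesis using cycle_edges_vs[OF es(1)] cycle_edges_vs[OF es(2)] by simp
  qed
  have up: "?P (j0 + k)" if "j0 + k < ?n" for k
    using that
  proof (induction k)
    case 0 then show ?case using j0 assms(4) by simp
  next
    case (Suc k)
    have a: "0 < j0 + k" "j0 + k + 1 < ?n" using Suc.prems j0 by auto
    have "?P (j0 + k)" using Suc a by simp
    from conjunct2[OF step[OF a this]] show ?case by simp
  qed
  have down: "?P (j0 - k)" if "k \<le> j0" for k
    using that
  proof (induction k)
    case 0 then show ?case using j0 assms(4) by simp
  next
    case (Suc k)
    have pk: "?P (j0 - k)" using Suc.IH Suc.prems by simp
    have a: "0 < j0 - k" "j0 - k + 1 < ?n" using Suc.prems j0 by auto
    have "?P (j0 - k - 1)" using step[OF a pk] by (rule conjunct1)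
    moreover have "j0 - Suc k = j0 - k - 1" by simp
    ultimately show ?case by metis
  qed
  have allP: "?P j" if "j < ?n" for j
  proof (cases "j \<le> j0")
    case True then show ?thesis using down[of "j0 - j"] by simp
  next
    case False then show ?thesis using up[of "j - j0"] that by simp
  qed
  show ?thesis
  proof
    fix e assume "e \<in> ear_edges xs"
    then obtain i where i: "i + 1 < ?n" "e = {xs ! i, xs ! (i + 1)}" unfolding ear_edges_def by auto
    show "e \<in> cycle_edges vs"
    proof (cases "i = 0")
      case True
      have "1 + 1 < ?n" using j0 by simp
      hence "{xs ! (1 - 1), xs ! 1} \<in> cycle_edges vs" using ear_step[OF assms(1-3), of 1] allP[of 1] by auto
      then show ?thesis using i True by simp
    next
      case False
      hence "0 < i" by simp
      from conjunct2[OF ear_step[OF assms(1-3) this i(1) allP]] i show ?thesis by simp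
    qed
  qed
qed

lemma ear_edges_meet:
  assumes "e \<in> ear_edges xs" "length xs \<ge> 3"
  shows "e \<inter> set (butlast (tl xs)) \<noteq> {}"
proof -
  obtain i where i: "i + 1 < length xs" "e = {xs ! i, xs ! (i + 1)}"
    using assms(1) unfolding ear_edges_def by auto
  show ?thesis
  proof (cases "i = 0")
    case True
    hence "xs ! 1 \<in> set (butlast (tl xs))" unfolding inner_set using assms(2)
      by (intro CollectI exI[of _ 1]) auto
    thus ?thesis using i True by auto
  next
    case False
    hence "xs ! i \<in> set (butlast (tl xs))" unfolding inner_set using i by auto
    thus ?thesis using i by auto
  qed
qed

lemma ear_meet_edges:
  assumes "finite E" "strict_ear V E xs" "e \<in> E" "e \<inter> set (butlast (tl xs)) \<noteq> {}"
  shows "e \<in> ear_edges xs"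
proof -
  obtain j where j: "0 < j" "j + 1 < length xs" "xs ! j \<in> e"
    using assms(4) unfolding inner_set by auto
  have se: "distinct xs" "\<forall>i. i + 1 < length xs \<longrightarrow> {xs ! i, xs ! (i + 1)} \<in> E"
    "degree E (xs ! j) = 2"
    using assms(2) j unfolding strict_ear_def by auto
  have eL: "{xs ! (j - 1), xs ! j} \<in> E" using se(2)[rule_format, of "j-1"] j by auto
  have eR: "{xs ! j, xs ! (j + 1)} \<in> E" using se(2) j by auto
  have ne: "{xs ! (j - 1), xs ! j} \<noteq> {xs ! j, xs ! (j + 1)}"
    using se(1) j by (auto simp: doubleton_eq_iff nth_eq_iff_index_eq)
  have "e = {xs ! (j - 1), xs ! j} \<or> e = {xs ! j, xs ! (j + 1)}"
    by (rule deg2[OF assms(1) se(3) eL eR ne _ _ assms(3) j(3)]) auto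
  moreover have "{xs ! (j - 1), xs ! j} \<in> ear_edges xs" unfolding ear_edges_def using j
    by (intro CollectI exI[of _ "j - 1"]) auto
  moreover have "{xs ! j, xs ! (j + 1)} \<in> ear_edges xs" unfolding ear_edges_def using j by auto
  ultimately show ?thesis by auto
qed

lemma cycle_restrict:
  assumes "is_cycle V E vs" "set vs \<inter> S = {}"
  shows "is_cycle (V - S) {e \<in> E. e \<inter> S = {}} vs"
proof -
  have "vs ! i \<in> set vs" "vs ! ((i + 1) mod length vs) \<in> set vs" if "i < length vs" for i
    using that mod_mem by auto
  thus ?thesis using assms nth_mem unfolding is_cycle_def by fastforce
qed

lemma cycle_mono: "is_cycle V' E' vs \<Longrightarrow> V' \<subseteq> V \<Longrightarrow> E' \<subseteq> E \<Longrightarrow> is_cycle V E vs"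
  unfolding is_cycle_def by auto

definition long_cycles :: "nat \<Rightarrow> 'a set \<Rightarrow> 'a set set \<Rightarrow> bool" where
  "long_cycles r V E \<longleftrightarrow> (\<forall>vs. is_cycle V E vs \<longrightarrow> (\<exists>ws. is_cycle V E ws \<and> length ws \<ge> r + 1))"

lemma extend_coloring:
  assumes good: "good_coloring r (V - S) {e \<in> E. e \<inter> S = {}} (r + 1) c'"
    and g: "\<And>e. e \<in> E \<Longrightarrow> e \<inter> S \<noteq> {} \<Longrightarrow> g e < r + 1"
    and meet: "\<And>vs. is_cycle V E vs \<Longrightarrow> set vs \<inter> S \<noteq> {} \<Longrightarrow>
        card ((\<lambda>e. if e \<inter> S = {} then c' e else g e) ` cycle_edges vs) \<ge> r + 1"
  shows "good_coloring r V E (r + 1) (\<lambda>e. if e \<inter> S = {} then c' e else g e)"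
  unfolding good_coloring_def
proof (intro conjI allI impI ballI)
  fix e assume "e \<in> E"
  thus "(if e \<inter> S = {} then c' e else g e) < r + 1"
    using good g unfolding good_coloring_def by auto
next
  fix vs assume cyc: "is_cycle V E vs"
  show "min (length vs) (r + 1) \<le> card ((\<lambda>e. if e \<inter> S = {} then c' e else g e) ` cycle_edges vs)"
  proof (cases "set vs \<inter> S = {}")
    case True
    have cyc': "is_cycle (V - S) {e \<in> E. e \<inter> S = {}} vs" using cycle_restrict[OF cyc True] .
    have "(\<lambda>e. if e \<inter> S = {} then c' e else g e) ` cycle_edges vs = c' ` cycle_edges vs"
      using cycle_edges_sub[OF cyc'] by (intro image_cong) auto
    thus ?thesis using good cyc' unfolding good_coloring_def by auto
  next
    case False
    thus ?thesis using meet[OF cyc] by simp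
  qed
qed

lemma main_lemma:
  assumes "path_degenerate (r + 1) V E" "finite E" "r \<ge> 1"
  shows "(\<exists>c. good_coloring r V E (r + 1) c) \<and> long_cycles r V E"
  using assms
proof (induction V E rule: path_degenerate.induct)
  case empty
  show ?case unfolding good_coloring_def long_cycles_def is_cycle_def by auto
next
  case (step V E V' E')
  from step.hyps(1) consider
      (vert) v where "v \<in> V" "degree E v = 0 \<or> degree E v = 1" "(V', E') = delete_vertices {v} V E"
    | (ear) xs where "strict_ear V E xs" "r + 1 \<le> length xs - 1"
      "(V', E') = delete_vertices (set (butlast (tl xs))) V E"
    unfolding p_reduction_def by blast
  then show ?case
  proof cases
    case vert
    note v = vert
    have VE: "V' = V - {v}" "E' = {e \<in> E. e \<inter> {v} = {}}" using v(3) unfolding delete_vertices_def by auto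
    have fin': "finite E'" using step.prems VE by auto
    from step.IH[OF fin' step.prems(2)] obtain c' where
      c': "good_coloring r (V - {v}) {e \<in> E. e \<inter> {v} = {}} (r + 1) c'" and lc: "long_cycles r V' E'"
      using VE by auto
    have novs: "set vs \<inter> {v} = {}" if "is_cycle V E vs" for vs
      using cycle_vertex_deg[OF step.prems(1) that, of v] v(2) by auto
    have "good_coloring r V E (r + 1) (\<lambda>e. if e \<inter> {v} = {} then c' e else (\<lambda>_. 0) e)"
      by (rule extend_coloring[OF c']) (use novs in auto)
    moreover have "long_cycles r V E"
      unfolding long_cycles_def
    proof (intro allI impI)
      fix vs assume cyc: "is_cycle V E vs"
      have "is_cycle V' E' vs" using cycle_restrict[OF cyc novs[OF cyc]] VE by simp
      then obtain ws where "is_cycle V' E' ws" "length ws \<ge> r + 1" using lc unfolding long_cycles_def by blast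
      thus "\<exists>ws. is_cycle V E ws \<and> length ws \<ge> r + 1" using VE cycle_mono[of V' E' ws V E] by auto
    qed
    ultimately show ?thesis by blast
  next
    case ear
    note xs = ear
    define S where "S = set (butlast (tl xs))"
    have VE: "V' = V - S" "E' = {e \<in> E. e \<inter> S = {}}" using xs(3) unfolding delete_vertices_def S_def by auto
    have fin': "finite E'" using step.prems VE by auto
    from step.IH[OF fin' step.prems(2)] obtain c' where
      c': "good_coloring r (V - S) {e \<in> E. e \<inter> S = {}} (r + 1) c'" and lc: "long_cycles r V' E'"
      using VE by auto
    have n3: "length xs \<ge> 3" using xs(2) step.prems(2) by simp
    have dist: "distinct xs" using xs(1) unfolding strict_ear_def by auto
    define g where "g e = (SOME i. i + 1 < length xs \<and> e = {xs ! i, xs ! (i + 1)}) mod (r + 1)" for e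
    have gval: "g {xs ! m, xs ! (m + 1)} = m" if "m < r + 1" for m
    proof -
      have m: "m + 1 < length xs" using that xs(2) by simp
      have "(SOME i. i + 1 < length xs \<and> {xs ! m, xs ! (m + 1)} = {xs ! i, xs ! (i + 1)}) = m"
        by (rule some_equality) (use m ear_inj[OF dist] in auto)
      thus ?thesis unfolding g_def using that by simp
    qed
    have meetcase: "ear_edges xs \<subseteq> cycle_edges vs" if "is_cycle V E vs" "set vs \<inter> S \<noteq> {}" for vs
      using ear_all[OF step.prems(1) xs(1) that(1)] that(2) unfolding S_def by blast
    have "good_coloring r V E (r + 1) (\<lambda>e. if e \<inter> S = {} then c' e else g e)"
    proof (rule extend_coloring[OF c'])
      show "g e < r + 1" for e unfolding g_def by simp
    next
      fix vs assume cyc: "is_cycle V E vs" "set vs \<inter> S \<noteq> {}"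
      let ?c = "\<lambda>e. if e \<inter> S = {} then c' e else g e"
      have "{..<r+1} \<subseteq> ?c ` cycle_edges vs"
      proof
        fix m assume "m \<in> {..<r+1}"
        hence m: "m < r + 1" "m + 1 < length xs" using xs(2) by auto
        have ee: "{xs ! m, xs ! (m + 1)} \<in> ear_edges xs" unfolding ear_edges_def using m by auto
        have "{xs ! m, xs ! (m + 1)} \<inter> S \<noteq> {}" using ear_edges_meet[OF ee n3] unfolding S_def .
        hence cm: "?c {xs ! m, xs ! (m + 1)} = m" using gval[OF m(1)] by auto
        have inC: "{xs ! m, xs ! (m + 1)} \<in> cycle_edges vs" using meetcase[OF cyc] ee by (rule subsetD)
        show "m \<in> ?c ` cycle_edges vs" by (rule rev_image_eqI[OF inC]) (rule cm[symmetric])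
      qed
      hence "card {..<r+1} \<le> card (?c ` cycle_edges vs)"
        by (intro card_mono) (auto simp: finite_cycle_edges)
      thus "r + 1 \<le> card (?c ` cycle_edges vs)" by simp
    qed
    moreover have "long_cycles r V E"
      unfolding long_cycles_def
    proof (intro allI impI)
      fix vs assume cyc: "is_cycle V E vs"
      show "\<exists>ws. is_cycle V E ws \<and> length ws \<ge> r + 1"
      proof (cases "set vs \<inter> S = {}")
        case True
        have "is_cycle V' E' vs" using cycle_restrict[OF cyc True] VE by simp
        then obtain ws where "is_cycle V' E' ws" "length ws \<ge> r + 1" using lc unfolding long_cycles_def by blast
        thus ?thesis using VE cycle_mono[of V' E' ws V E] by auto
      next
        case False
        have "card (ear_edges xs) \<le> card (cycle_edges vs)"
          using meetcase[OF cyc False] by (intro card_mono) (auto simp: finite_cycle_edges)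
        hence "length xs - 1 \<le> length vs" using ear_card[OF dist] card_cycle_edges[of vs] by simp
        thus ?thesis using cyc xs(2) by auto
      qed
    qed
    ultimately show ?thesis by blast
  qed
qed

theorem mainTheorem10:
  fixes V :: "'a set" and E :: "'a set set" and r :: nat
  assumes "simple_graph V E" and "r \<ge> 1" and "path_degenerate (r + 1) V E"
  shows "(forest V E \<longrightarrow> arb r V E = 1) \<and> (\<not> forest V E \<longrightarrow> arb r V E = r + 1)"
proof -
  have "E \<subseteq> Pow V" using assms(1) unfolding simple_graph_def by auto
  hence finE: "finite E" using assms(1) unfolding simple_graph_def by (meson finite_Pow_iff finite_subset)
  obtain c where c: "good_coloring r V E (r + 1) c" and lc: "long_cycles r V E"
    using main_lemma[OF assms(3) finE assms(2)] by blast
  show ?thesis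
  proof (intro conjI impI)
    assume "forest V E"
    hence "good_coloring r V E 1 (\<lambda>_. 0)" unfolding good_coloring_def forest_def by auto
    thus "arb r V E = 1" unfolding arb_def by (intro Least_equality) auto
  next
    assume "\<not> forest V E"
    then obtain vs where "is_cycle V E vs" unfolding forest_def by auto
    then obtain ws where ws: "is_cycle V E ws" "length ws \<ge> r + 1" using lc unfolding long_cycles_def by blast
    show "arb r V E = r + 1" unfolding arb_def
    proof (rule Least_equality)
      show "1 \<le> r + 1 \<and> (\<exists>c. good_coloring r V E (r + 1) c)" using c by auto
    next
      fix k assume "1 \<le> k \<and> (\<exists>c. good_coloring r V E k c)"
      then obtain d where d: "good_coloring r V E k d" by auto
      have "r + 1 \<le> card (d ` cycle_edges ws)" using d ws unfolding good_coloring_def by auto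
      moreover have "d ` cycle_edges ws \<subseteq> {..<k}" using d cycle_edges_sub[OF ws(1)]
        unfolding good_coloring_def by auto
      hence "card (d ` cycle_edges ws) \<le> k" by (metis card_lessThan card_mono finite_lessThan)
      ultimately show "r + 1 \<le> k" by simp
    qed
  qed
qed

end
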